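(* Let $d\in\{1,2,3\}$ and let $G$ be a graph with a nonedge $f=uv$. Suppose there is an induced minor model $\{B_x\}$ of a $d$-forbidden graph in $G\cup f$ such that $u\in B_a$, $v\in B_b$ with $a\ne b$ and $f$ is the only edge of $G\cup f$ joining $B_a$ and $B_b$. Then $(G,f)$ does not have the $d$-SIP.
   Context: A linkage $(G,\ell)$: finite simple graph $G$ and $\ell:E(G)\to\mathbb{R}_{\ge0}$ (squared lengths). A $d$-realization is $p:V(G)\to\mathbb{R}^d$ with $\|p(x)-p(y)\|^2=\ell(xy)$ for all $xy\in E(G)$; $\mathcal{C}^d(G,\ell)$ is the set of these. For a nonedge $f=uv$, $\Omega^d_f(G,\ell)=\{\|p(u)-p(v)\|^2:p\in\mathcal{C}^d(G,\ell)\}$; $(G,f)$ has the $d$-SIP if $\Omega^d_f(G,\ell)$ is convex (empty or a closed interval) for every $\ell$. $G\cup f$ adds $f$ as an edge. An induced minor model of $M$ in $H$ is a partition $\{B_x\}_{x\in V(M)}$ of $V(H)$ into nonempty sets each inducing a connected subgraph such that $xy\in E(M)$ iff some edge of $H$ joins $B_x$ and $B_y$. The $d$-forbidden graphs are $K_3$ for $d=1$, $K_4$ for $d=2$, and $K_5$ and $K_{2,2,2}$ for $d=3$. *)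

theory Defs
  imports "HOL-Analysis.Analysis"
begin

definition simple_graph :: "'a set \<Rightarrow> 'a set set \<Rightarrow> bool" where
  "simple_graph V E \<longleftrightarrow> finite V \<and>
     (\<forall>e\<in>E. \<exists>x y. x \<noteq> y \<and> x \<in> V \<and> y \<in> V \<and> e = {x, y})"

definition induces_connected :: "'a set set \<Rightarrow> 'a set \<Rightarrow> bool" where
  "induces_connected E S \<longleftrightarrow> S \<noteq> {} \<and>
     (\<forall>x\<in>S. \<forall>y\<in>S. (x, y) \<in> {(a, b). a \<in> S \<and> b \<in> S \<and> {a, b} \<in> E}\<^sup>*)"

definition induced_minor_model ::
  "'b set \<Rightarrow> 'b set set \<Rightarrow> 'a set \<Rightarrow> 'a set set \<Rightarrow> ('b \<Rightarrow> 'a set) \<Rightarrow> bool" where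
  "induced_minor_model VM EM VH EH B \<longleftrightarrow>
     (\<forall>x\<in>VM. B x \<noteq> {} \<and> induces_connected EH (B x)) \<and>
     (\<Union>x\<in>VM. B x) = VH \<and>
     (\<forall>x\<in>VM. \<forall>y\<in>VM. x \<noteq> y \<longrightarrow> B x \<inter> B y = {}) \<and>
     (\<forall>x\<in>VM. \<forall>y\<in>VM. x \<noteq> y \<longrightarrow>
        ({x, y} \<in> EM \<longleftrightarrow> (\<exists>p\<in>B x. \<exists>q\<in>B y. {p, q} \<in> EH)))"

text \<open>Realizations of the linkage (G, l) in the Euclidean space real^'n
  (d = CARD('n)); l gives squared lengths.\<close>
definition realizations :: "'n itself \<Rightarrow> 'a set set \<Rightarrow> ('a set \<Rightarrow> real) \<Rightarrow> ('a \<Rightarrow> real^'n::finite) set" where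
  "realizations _ E l = {p. \<forall>x y. {x, y} \<in> E \<longrightarrow> (norm (p x - p y))\<^sup>2 = l {x, y}}"

definition Omega :: "'n::finite itself \<Rightarrow> 'a set set \<Rightarrow> ('a set \<Rightarrow> real) \<Rightarrow> 'a \<Rightarrow> 'a \<Rightarrow> real set" where
  "Omega T E l u v = {(norm (p u - p v))\<^sup>2 | p. p \<in> realizations T E l}"

definition has_SIP :: "'n::finite itself \<Rightarrow> 'a set set \<Rightarrow> 'a \<Rightarrow> 'a \<Rightarrow> bool" where
  "has_SIP T E u v \<longleftrightarrow> (\<forall>l. (\<forall>e\<in>E. l e \<ge> 0) \<longrightarrow> convex (Omega T E l u v))"

definition complete_graph :: "nat \<Rightarrow> nat set \<times> nat set set" where
  "complete_graph n = ({0..<n}, {{i, j} | i j. i < n \<and> j < n \<and> i \<noteq> j})"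

text \<open>K_{2,2,2} with parts {0,1}, {2,3}, {4,5}.\<close>
definition K222 :: "nat set \<times> nat set set" where
  "K222 = ({0..<6}, {{i, j} | i j. i < 6 \<and> j < 6 \<and> i div 2 \<noteq> j div 2})"

definition forbidden_graph :: "nat \<Rightarrow> nat set \<Rightarrow> nat set set \<Rightarrow> bool" where
  "forbidden_graph d VM EM \<longleftrightarrow>
     (d = 1 \<and> (VM, EM) = complete_graph 3) \<or>
     (d = 2 \<and> (VM, EM) = complete_graph 4) \<or>
     (d = 3 \<and> ((VM, EM) = complete_graph 5 \<or> (VM, EM) = K222))"

end

theory Submission imports Defs begin
lemma orth_pm:
  fixes S :: "(real^'n) set" and U W :: "real^'n"
  assumes fin: "finite S" and cS: "card S = CARD('n) - 1"
    and S1: "\<forall>s\<in>S. s \<bullet> s = 1" and S0: "\<forall>s\<in>S. \<forall>t\<in>S. s \<noteq> t \<longrightarrow> s \<bullet> t = 0"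
    and U1: "U \<bullet> U = 1" and W1: "W \<bullet> W = 1" and US: "\<forall>s\<in>S. U \<bullet> s = 0" and WS: "\<forall>s\<in>S. W \<bullet> s = 0"
  shows "U \<bullet> W = 1 \<or> U \<bullet> W = -1"
proof -
  define R where "R = W - (W \<bullet> U) *\<^sub>R U"
  have RU: "R \<bullet> U = 0" by (simp add: R_def inner_diff_left U1)
  have Rs: "\<forall>s\<in>S. R \<bullet> s = 0" using US WS by (simp add: R_def inner_diff_left)
  have UnS: "U \<notin> S" using US U1 by auto
  have R0: "R = 0"
  proof (rule ccontr)
    assume Rn: "R \<noteq> 0"
    have RnS: "R \<notin> S" using Rs Rn by auto
    have RnU: "R \<noteq> U" using RU U1 by auto
    let ?T = "insert R (insert U S)"
    have po: "pairwise orthogonal ?T"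
      unfolding pairwise_def orthogonal_def using S0 US Rs RU
      by (auto simp: inner_commute)
    have z: "0 \<notin> ?T" using Rn U1 S1 by auto
    have "independent ?T" by (rule pairwise_orthogonal_independent[OF po z])
    hence "card ?T \<le> DIM(real^'n)" using independent_bound by blast
    moreover have "card ?T = card S + 2" using fin UnS RnS RnU by simp
    moreover have "CARD('n) \<ge> 1" by (simp add: Suc_leI)
    ultimately show False using cS by simp
  qed
  hence W: "W = (W \<bullet> U) *\<^sub>R U" by (simp add: R_def)
  have "W \<bullet> W = (W \<bullet> U)^2" by (subst (1 2) W) (simp add: U1 power2_eq_square)
  hence "(U \<bullet> W)^2 = 1" using W1 by (simp add: inner_commute)
  thus ?thesis by (simp add: power2_eq_1_iff)
qed
lemma reduction:
  fixes V :: "'a set" and E :: "'a set set" and u v :: 'a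
    and VM :: "nat set" and EM :: "nat set set" and B :: "nat \<Rightarrow> 'a set" and a b :: nat
    and Q0 Q1 :: "nat \<Rightarrow> real^'n::finite"
  assumes sg: "simple_graph V E"
    and uvE: "{u, v} \<notin> E"
    and mm: "induced_minor_model VM EM V (insert {u, v} E) B"
    and aV: "a \<in> VM" and bV: "b \<in> VM" and ab: "a \<noteq> b" and ua: "u \<in> B a" and vb: "v \<in> B b"
    and only: "\<forall>x\<in>B a. \<forall>y\<in>B b. {x, y} \<in> insert {u, v} E \<longrightarrow> {x, y} = {u, v}"
    and q0: "Q0 a = Q0 b"
    and q1: "(norm (Q1 a - Q1 b))\<^sup>2 = 4"
    and q1e: "\<forall>x\<in>VM. \<forall>y\<in>VM. x \<noteq> y \<longrightarrow> {x,y} \<in> EM \<longrightarrow> {x,y} \<noteq> {a,b} \<longrightarrow>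
                (norm (Q1 x - Q1 y))\<^sup>2 = (norm (Q0 x - Q0 y))\<^sup>2"
    and qiv: "\<And>P :: nat \<Rightarrow> real^'n. (\<forall>x\<in>VM. \<forall>y\<in>VM. x \<noteq> y \<longrightarrow> {x,y} \<in> EM \<longrightarrow> {x,y} \<noteq> {a,b} \<longrightarrow>
                (norm (P x - P y))\<^sup>2 = (norm (Q0 x - Q0 y))\<^sup>2) \<Longrightarrow> (norm (P a - P b))\<^sup>2 \<in> {0, 4}"
  shows "\<not> has_SIP TYPE('n) E u v"
proof -
  note mmd = mm[unfolded induced_minor_model_def]
  have cover: "(\<Union>x\<in>VM. B x) = V" using mmd by blast
  have disj: "\<And>x y s. x \<in> VM \<Longrightarrow> y \<in> VM \<Longrightarrow> s \<in> B x \<Longrightarrow> s \<in> B y \<Longrightarrow> x = y"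
    using mmd by blast
  have conn: "\<And>x. x \<in> VM \<Longrightarrow> induces_connected (insert {u, v} E) (B x)" using mmd by blast
  have iff: "\<And>x y. x \<in> VM \<Longrightarrow> y \<in> VM \<Longrightarrow> x \<noteq> y \<Longrightarrow>
      ({x, y} \<in> EM \<longleftrightarrow> (\<exists>p\<in>B x. \<exists>q\<in>B y. {p, q} \<in> insert {u, v} E))" using mmd by blast
  have EV: "\<And>s t. {s, t} \<in> E \<Longrightarrow> s \<in> V \<and> t \<in> V"
    using sg unfolding simple_graph_def by (metis doubleton_eq_iff)
  define blk where "blk s = (SOME x. x \<in> VM \<and> s \<in> B x)" for s
  have blk: "\<And>s. s \<in> V \<Longrightarrow> blk s \<in> VM \<and> s \<in> B (blk s)"
  proof -
    fix s assume "s \<in> V"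
    then have "\<exists>x. x \<in> VM \<and> s \<in> B x" using cover by blast
    then show "blk s \<in> VM \<and> s \<in> B (blk s)" unfolding blk_def by (rule someI_ex)
  qed
  have blk_eq: "\<And>s x. x \<in> VM \<Longrightarrow> s \<in> B x \<Longrightarrow> blk s = x"
  proof -
    fix s x assume x: "x \<in> VM" "s \<in> B x"
    then have "s \<in> V" using cover by blast
    then show "blk s = x" using blk disj x by blast
  qed
  have blku: "blk u = a" using blk_eq aV ua .
  have blkv: "blk v = b" using blk_eq bV vb .
  define f where "f s t = (norm (Q0 (blk s) - Q0 (blk t)))\<^sup>2" for s t
  have fsym: "f s t = f t s" for s t unfolding f_def by (simp add: norm_minus_commute)
  define l where "l e = (SOME r. \<exists>s t. e = {s, t} \<and> r = f s t)" for e
  have lval: "l {s, t} = f s t" for s t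
  proof -
    have "\<exists>s' t'. {s,t} = {s', t'} \<and> l {s,t} = f s' t'"
      unfolding l_def by (rule someI_ex) blast
    then obtain s' t' where "{s,t} = {s', t'}" "l {s,t} = f s' t'" by blast
    then show ?thesis using fsym by (metis doubleton_eq_iff)
  qed
  have lpos: "\<forall>e\<in>E. l e \<ge> 0"
  proof
    fix e assume "e \<in> E"
    then obtain s t where "e = {s,t}" using sg unfolding simple_graph_def by blast
    then show "l e \<ge> 0" by (simp add: lval f_def)
  qed
  let ?Om = "Omega TYPE('n) E l u v"
  have in0: "0 \<in> ?Om"
  proof -
    have "(\<lambda>s. Q0 (blk s)) \<in> realizations TYPE('n) E l"
      unfolding realizations_def by (simp add: lval f_def)
    moreover have "(norm ((\<lambda>s. Q0 (blk s)) u - (\<lambda>s. Q0 (blk s)) v))\<^sup>2 = 0"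
      using blku blkv q0 by simp
    ultimately show ?thesis unfolding Omega_def by (metis (mono_tags, lifting) mem_Collect_eq)
  qed
  have in4: "4 \<in> ?Om"
  proof -
    have "(\<lambda>s. Q1 (blk s)) \<in> realizations TYPE('n) E l"
      unfolding realizations_def
    proof (intro CollectI allI impI)
      fix x y assume e: "{x, y} \<in> E"
      have xV: "x \<in> V" and yV: "y \<in> V" using EV[OF e] by auto
      show "(norm (Q1 (blk x) - Q1 (blk y)))\<^sup>2 = l {x, y}"
      proof (cases "blk x = blk y")
        case True then show ?thesis by (simp add: lval f_def)
      next
        case False
        have X: "blk x \<in> VM" "x \<in> B (blk x)" using blk xV by auto
        have Y: "blk y \<in> VM" "y \<in> B (blk y)" using blk yV by auto
        have EMe: "{blk x, blk y} \<in> EM" using iff[OF X(1) Y(1) False] X Y e by blast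
        have ne: "{blk x, blk y} \<noteq> {a, b}"
        proof
          assume "{blk x, blk y} = {a, b}"
          then have "(blk x = a \<and> blk y = b) \<or> (blk x = b \<and> blk y = a)" by (auto simp: doubleton_eq_iff)
          then show False
          proof
            assume "blk x = a \<and> blk y = b"
            then have "{x, y} = {u, v}" using only X Y e by auto
            then show False using e uvE by simp
          next
            assume "blk x = b \<and> blk y = a"
            then have "{y, x} = {u, v}" using only X Y e by (auto simp: insert_commute)
            then show False using e uvE by (simp add: insert_commute)
          qed
        qed
        show ?thesis using q1e X(1) Y(1) False EMe ne by (simp add: lval f_def)
      qed
    qed
    moreover have "(norm ((\<lambda>s. Q1 (blk s)) u - (\<lambda>s. Q1 (blk s)) v))\<^sup>2 = 4"
      using blku blkv q1 by simp
    ultimately show ?thesis unfolding Omega_def by (metis (mono_tags, lifting) mem_Collect_eq)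
  qed
  have sub: "?Om \<subseteq> {0, 4}"
  proof
    fix r assume "r \<in> ?Om"
    then obtain p where p: "p \<in> realizations TYPE('n) E l" and r: "r = (norm (p u - p v))\<^sup>2"
      unfolding Omega_def by blast
    have pe: "\<And>s t. {s,t} \<in> E \<Longrightarrow> (norm (p s - p t))\<^sup>2 = f s t"
      using p unfolding realizations_def by (simp add: lval)
    have const: "\<And>x s t. x \<in> VM \<Longrightarrow> s \<in> B x \<Longrightarrow> t \<in> B x \<Longrightarrow> p s = p t"
    proof -
      fix x s t assume x: "x \<in> VM" and s: "s \<in> B x" and t: "t \<in> B x"
      have "(s, t) \<in> {(c, d). c \<in> B x \<and> d \<in> B x \<and> {c, d} \<in> insert {u, v} E}\<^sup>*"
        using conn[OF x] s t unfolding induces_connected_def by blast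
      then show "p s = p t"
      proof (induction rule: rtrancl_induct)
        case base then show ?case by simp
      next
        case (step c d)
        then have cd: "c \<in> B x" "d \<in> B x" "{c, d} \<in> insert {u, v} E" by auto
        have "{c, d} \<noteq> {u, v}"
        proof
          assume "{c, d} = {u, v}"
          then have "u \<in> B x" "v \<in> B x" using cd by auto
          then have "x = a" "x = b" using disj x aV bV ua vb by auto
          then show False using ab by simp
        qed
        then have "{c, d} \<in> E" using cd by simp
        then have "(norm (p c - p d))\<^sup>2 = 0"
          using pe blk_eq[OF x cd(1)] blk_eq[OF x cd(2)] by (simp add: f_def)
        then show ?case using step by simp
      qed
    qed
    define P where "P x = p (SOME s. s \<in> B x)" for x
    have Pv: "\<And>x s. x \<in> VM \<Longrightarrow> s \<in> B x \<Longrightarrow> P x = p s"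
    proof -
      fix x s assume x: "x \<in> VM" and s: "s \<in> B x"
      then have "(SOME s. s \<in> B x) \<in> B x" by (meson someI)
      then show "P x = p s" unfolding P_def using const x s by blast
    qed
    have H: "\<forall>x\<in>VM. \<forall>y\<in>VM. x \<noteq> y \<longrightarrow> {x,y} \<in> EM \<longrightarrow> {x,y} \<noteq> {a,b} \<longrightarrow>
                (norm (P x - P y))\<^sup>2 = (norm (Q0 x - Q0 y))\<^sup>2"
    proof (intro ballI impI)
      fix x y assume x: "x \<in> VM" and y: "y \<in> VM" and xy: "x \<noteq> y" and EMe: "{x, y} \<in> EM"
        and ne: "{x, y} \<noteq> {a, b}"
      obtain s t where s: "s \<in> B x" and t: "t \<in> B y" and st: "{s, t} \<in> insert {u, v} E"
        using iff[OF x y xy] EMe by blast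
      have "{s, t} \<noteq> {u, v}"
      proof
        assume "{s, t} = {u, v}"
        then have "(s = u \<and> t = v) \<or> (s = v \<and> t = u)" by (auto simp: doubleton_eq_iff)
        then show False
        proof
          assume "s = u \<and> t = v"
          then have "x = a" "y = b" using disj x y aV bV s t ua vb by auto
          then show False using ne by simp
        next
          assume "s = v \<and> t = u"
          then have "x = b" "y = a" using disj x y aV bV s t ua vb by auto
          then show False using ne by (auto simp: insert_commute)
        qed
      qed
      then have "{s, t} \<in> E" using st by simp
      then have "(norm (p s - p t))\<^sup>2 = f s t" by (rule pe)
      then show "(norm (P x - P y))\<^sup>2 = (norm (Q0 x - Q0 y))\<^sup>2"
        using Pv[OF x s] Pv[OF y t] blk_eq[OF x s] blk_eq[OF y t] by (simp add: f_def)
    qed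
    have "(norm (P a - P b))\<^sup>2 \<in> {0, 4}" using qiv[of P] H by blast
    moreover have "P a = p u" "P b = p v" using Pv aV bV ua vb by auto
    ultimately show "r \<in> {0, 4}" using r by simp
  qed
  show ?thesis
  proof
    assume "has_SIP TYPE('n) E u v"
    then have cv: "convex ?Om" using lpos unfolding has_SIP_def by blast
    have "(1/2) *\<^sub>R (0::real) + (1/2) *\<^sub>R 4 \<in> ?Om"
      using convexD[OF cv in0 in4, of "1/2" "1/2"] by simp
    then have "(2::real) \<in> ?Om" by simp
    then show False using sub by auto
  qed
qed
definition edgeok :: "nat set \<Rightarrow> nat set set \<Rightarrow> nat \<Rightarrow> nat \<Rightarrow> (nat \<Rightarrow> real^'n::finite) \<Rightarrow> (nat \<Rightarrow> real^'n) \<Rightarrow> bool" where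
  "edgeok VM EM a b P Q0 \<longleftrightarrow> (\<forall>x\<in>VM. \<forall>y\<in>VM. x \<noteq> y \<longrightarrow> {x,y} \<in> EM \<longrightarrow> {x,y} \<noteq> {a,b} \<longrightarrow>
                (norm (P x - P y))\<^sup>2 = (norm (Q0 x - Q0 y))\<^sup>2)"

definition good :: "nat set \<Rightarrow> nat set set \<Rightarrow> nat \<Rightarrow> nat \<Rightarrow> (nat \<Rightarrow> real^'n::finite) \<Rightarrow> (nat \<Rightarrow> real^'n) \<Rightarrow> bool" where
  "good VM EM a b Q0 Q1 \<longleftrightarrow> Q0 a = Q0 b \<and> (norm (Q1 a - Q1 b))\<^sup>2 = 4 \<and> edgeok VM EM a b Q1 Q0 \<and>
     (\<forall>P. edgeok VM EM a b P Q0 \<longrightarrow> (norm (P a - P b))\<^sup>2 \<in> {0, 4})"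

lemma nsq: "(norm (x - y))\<^sup>2 = x \<bullet> x + y \<bullet> y - 2 * (x \<bullet> y)" for x y :: "real^'n::finite"
  by (simp add: power2_norm_eq_inner inner_diff_left inner_diff_right inner_commute)

lemma ax: "axis i (1::real) \<bullet> axis j 1 = (if i = j then 1 else 0)"
  by (simp add: inner_axis_axis)

lemma Kcase:
  fixes a b :: nat
  assumes aL: "a < CARD('n::finite) + 2" and bL: "b < CARD('n) + 2" and ab: "a \<noteq> b"
  shows "\<exists>Q0 Q1 :: nat \<Rightarrow> real^'n. good {0..<CARD('n)+2} {{i, j} | i j. i < CARD('n)+2 \<and> j < CARD('n)+2 \<and> i \<noteq> j} a b Q0 Q1"
proof -
  let ?n = "CARD('n)"
  let ?VM = "{0..<?n+2}"
  let ?EM = "{{i, j} | i j. i < ?n+2 \<and> j < ?n+2 \<and> i \<noteq> j}"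
  define F where "F = ?VM - {a, b}"
  have cF: "card F = ?n" using aL bL ab unfolding F_def by (simp add: card_Diff_subset)
  have fF: "finite F" unfolding F_def by simp
  have "F \<noteq> {}" using cF by auto
  then obtain c0 where c0: "c0 \<in> F" by blast
  define R where "R = F - {c0}"
  have cR: "card R = ?n - 1" using cF c0 fF unfolding R_def by simp
  have fR: "finite R" using fF unfolding R_def by simp
  obtain k :: 'n where True by simp
  have "card (UNIV - {k}) = ?n - 1" by simp
  then obtain \<sigma> where \<sigma>: "bij_betw \<sigma> R (UNIV - {k})"
    using finite_same_card_bij[OF fR, of "UNIV - {k}"] cR by auto
  have \<sigma>k: "\<And>r. r \<in> R \<Longrightarrow> \<sigma> r \<noteq> k" using \<sigma> unfolding bij_betw_def by auto
  have \<sigma>i: "\<And>r r'. r \<in> R \<Longrightarrow> r' \<in> R \<Longrightarrow> r \<noteq> r' \<Longrightarrow> \<sigma> r \<noteq> \<sigma> r'"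
    using \<sigma> unfolding bij_betw_def inj_on_def by auto
  define e where "e i = axis i (1::real)" for i :: 'n
  have ee: "e i \<bullet> e j = (if i = j then 1 else 0)" for i j unfolding e_def by (rule ax)
  define Q0 :: "nat \<Rightarrow> real^'n" where "Q0 x = (if x = c0 then 0 else if x \<in> R then e (\<sigma> x) else e k)" for x
  define Q1 where "Q1 = Q0(b := - e k)"
  have c0ab: "c0 \<noteq> a" "c0 \<noteq> b" "c0 < ?n + 2" using c0 unfolding F_def by auto
  have Rab: "\<And>r. r \<in> R \<Longrightarrow> r \<noteq> a \<and> r \<noteq> b \<and> r \<noteq> c0 \<and> r < ?n + 2" unfolding R_def F_def by auto
  have Q0a: "Q0 a = e k" and Q0b: "Q0 b = e k" using c0ab Rab unfolding Q0_def by auto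
  have Q0c: "Q0 c0 = 0" unfolding Q0_def by simp
  have Q0r: "\<And>r. r \<in> R \<Longrightarrow> Q0 r = e (\<sigma> r)" unfolding Q0_def using Rab by auto
  have VMcases: "\<And>y. y < ?n + 2 \<Longrightarrow> y = a \<or> y = b \<or> y = c0 \<or> y \<in> R"
    unfolding R_def F_def by auto
  have g1: "Q0 a = Q0 b" using Q0a Q0b by simp
  have g2a: "Q1 a - Q1 b = e k - (- e k)" unfolding Q1_def using ab Q0a by simp
  have g2: "(norm (Q1 a - Q1 b))\<^sup>2 = 4" unfolding g2a
    by (simp only: nsq, simp add: ee inner_minus_left inner_minus_right)
  have b_edge: "(norm (Q1 b - Q1 y))\<^sup>2 = (norm (Q0 b - Q0 y))\<^sup>2" if y: "y < ?n+2" "y \<noteq> a" "y \<noteq> b" for y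
  proof -
    have "y = c0 \<or> y \<in> R" using VMcases[OF y(1)] y by auto
    then show ?thesis
    proof
      assume "y = c0" then show ?thesis unfolding Q1_def using Q0b Q0c c0ab
        by (simp add: nsq ee)
    next
      assume yR: "y \<in> R" then show ?thesis unfolding Q1_def using Q0b Q0r[OF yR] Rab[OF yR] \<sigma>k[OF yR]
        by (simp add: nsq ee inner_minus_left inner_minus_right)
    qed
  qed
  have g3: "edgeok ?VM ?EM a b Q1 Q0"
    unfolding edgeok_def
  proof (intro ballI impI)
    fix x y assume x: "x \<in> ?VM" and y: "y \<in> ?VM" and xy: "x \<noteq> y" and ne: "{x, y} \<noteq> {a, b}"
    show "(norm (Q1 x - Q1 y))\<^sup>2 = (norm (Q0 x - Q0 y))\<^sup>2"
    proof (cases "x = b")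
      case True then show ?thesis using b_edge[of y] y xy ne by auto
    next
      case xb: False
      show ?thesis
      proof (cases "y = b")
        case True
        then have "(norm (Q1 y - Q1 x))\<^sup>2 = (norm (Q0 y - Q0 x))\<^sup>2" using b_edge[of x] x xy ne by (auto simp: insert_commute)
        then show ?thesis by (simp add: norm_minus_commute)
      next
        case False then show ?thesis using xb unfolding Q1_def by simp
      qed
    qed
  qed
  have g4: "(norm (P a - P b))\<^sup>2 \<in> {0, 4}" if H: "edgeok ?VM ?EM a b P Q0" for P :: "nat \<Rightarrow> real^'n"
  proof -
    have H': "\<And>x y. x < ?n+2 \<Longrightarrow> y < ?n+2 \<Longrightarrow> x \<noteq> y \<Longrightarrow> {x,y} \<noteq> {a,b} \<Longrightarrow>
       (norm (P x - P y))\<^sup>2 = (norm (Q0 x - Q0 y))\<^sup>2"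
    proof -
      fix x y assume "x < ?n+2" "y < ?n+2" "x \<noteq> y" "{x,y} \<noteq> {a,b}"
      moreover then have "{x,y} \<in> ?EM" by blast
      ultimately show "(norm (P x - P y))\<^sup>2 = (norm (Q0 x - Q0 y))\<^sup>2"
        using H unfolding edgeok_def by auto
    qed
    define Og where "Og = P c0"
    define X where "X r = P r - Og" for r
    define U where "U = P a - Og"
    define W where "W = P b - Og"
    have XX: "X r \<bullet> X r = 1" if r: "r \<in> R" for r
    proof -
      have "(norm (P r - P c0))\<^sup>2 = (norm (Q0 r - Q0 c0))\<^sup>2"
        using H'[of r c0] Rab[OF r] c0ab by auto
      then have "(norm (X r))\<^sup>2 = 1" using Q0c Q0r[OF r] by (simp add: X_def Og_def e_def)
      then show ?thesis by (simp add: power2_norm_eq_inner)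
    qed
    have XY: "X r \<bullet> X r' = 0" if r: "r \<in> R" "r' \<in> R" "r \<noteq> r'" for r r'
    proof -
      have "(norm (P r - P r'))\<^sup>2 = (norm (Q0 r - Q0 r'))\<^sup>2"
        using H'[of r r'] Rab r by auto
      also have "\<dots> = 2" using Q0r r \<sigma>i[OF r] by (simp add: nsq ee)
      finally have "(norm (X r - X r'))\<^sup>2 = 2" by (simp add: X_def)
      then show ?thesis using XX r by (simp add: nsq)
    qed
    have UU: "U \<bullet> U = 1"
    proof -
      have "(norm (P a - P c0))\<^sup>2 = (norm (Q0 a - Q0 c0))\<^sup>2"
        using H'[of a c0] aL c0ab by (auto simp: doubleton_eq_iff)
      then have "(norm U)\<^sup>2 = 1" using Q0c Q0a by (simp add: U_def Og_def e_def)
      then show ?thesis by (simp add: power2_norm_eq_inner)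
    qed
    have WW: "W \<bullet> W = 1"
    proof -
      have "(norm (P b - P c0))\<^sup>2 = (norm (Q0 b - Q0 c0))\<^sup>2"
        using H'[of b c0] bL c0ab by (auto simp: doubleton_eq_iff)
      then have "(norm W)\<^sup>2 = 1" using Q0c Q0b by (simp add: W_def Og_def e_def)
      then show ?thesis by (simp add: power2_norm_eq_inner)
    qed
    have UX: "U \<bullet> X r = 0" if r: "r \<in> R" for r
    proof -
      have "(norm (P a - P r))\<^sup>2 = (norm (Q0 a - Q0 r))\<^sup>2"
        using H'[of a r] aL Rab[OF r] by (auto simp: doubleton_eq_iff)
      also have "\<dots> = 2" using Q0r[OF r] Q0a \<sigma>k[OF r] by (simp add: nsq ee)
      finally have "(norm (U - X r))\<^sup>2 = 2" by (simp add: X_def U_def)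
      then show ?thesis using XX[OF r] UU by (simp add: nsq)
    qed
    have WX: "W \<bullet> X r = 0" if r: "r \<in> R" for r
    proof -
      have "(norm (P b - P r))\<^sup>2 = (norm (Q0 b - Q0 r))\<^sup>2"
        using H'[of b r] bL Rab[OF r] by (auto simp: doubleton_eq_iff)
      also have "\<dots> = 2" using Q0r[OF r] Q0b \<sigma>k[OF r] by (simp add: nsq ee)
      finally have "(norm (W - X r))\<^sup>2 = 2" by (simp add: X_def W_def)
      then show ?thesis using XX[OF r] WW by (simp add: nsq)
    qed
    have inj: "inj_on X R"
    proof (rule inj_onI)
      fix r r' assume "r \<in> R" "r' \<in> R" "X r = X r'"
      then show "r = r'" using XX XY by fastforce
    qed
    have "U \<bullet> W = 1 \<or> U \<bullet> W = -1"
    proof (rule orth_pm[of "X ` R"])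
      show "finite (X ` R)" using fR by simp
      show "card (X ` R) = ?n - 1" using card_image[OF inj] cR by simp
    qed (use XX XY UU WW UX WX in auto)
    moreover have "(norm (P a - P b))\<^sup>2 = (norm (U - W))\<^sup>2" by (simp add: U_def W_def)
    ultimately show ?thesis using UU WW by (auto simp: nsq)
  qed
  show ?thesis unfolding good_def using g1 g2 g3 g4 by blast
qed

definition prt :: "nat \<Rightarrow> nat" where "prt x = (if even x then x + 1 else x - 1)"

lemma k222_facts:
  fixes a b :: nat
  assumes "a < 6" "b < 6" "a div 2 \<noteq> b div 2"
  defines "c \<equiv> 2 * (3 - a div 2 - b div 2)" and "c' \<equiv> 2 * (3 - a div 2 - b div 2) + 1"
  shows "a \<noteq> prt a \<and> a \<noteq> b \<and> a \<noteq> prt b \<and> a \<noteq> c \<and> a \<noteq> c' \<and>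
         prt a \<noteq> b \<and> prt a \<noteq> prt b \<and> prt a \<noteq> c \<and> prt a \<noteq> c' \<and>
         b \<noteq> prt b \<and> b \<noteq> c \<and> b \<noteq> c' \<and> prt b \<noteq> c \<and> prt b \<noteq> c' \<and> c \<noteq> c' \<and>
         prt a < 6 \<and> prt b < 6 \<and> c < 6 \<and> c' < 6 \<and>
         prt a div 2 \<noteq> c div 2 \<and> prt b div 2 \<noteq> c div 2 \<and> prt a div 2 \<noteq> prt b div 2 \<and>
         prt a div 2 \<noteq> c' div 2 \<and> prt b div 2 \<noteq> c' div 2 \<and> a div 2 \<noteq> c div 2 \<and>
         a div 2 \<noteq> prt b div 2 \<and> a div 2 \<noteq> c' div 2 \<and> b div 2 \<noteq> c div 2 \<and>
         b div 2 \<noteq> prt a div 2 \<and> b div 2 \<noteq> c' div 2 \<and>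
         (\<forall>y<6. y div 2 \<noteq> b div 2 \<longrightarrow> y \<noteq> a \<longrightarrow> y = prt a \<or> y = c \<or> y = c')"
proof -
  have "a = 0 \<or> a = 1 \<or> a = 2 \<or> a = 3 \<or> a = 4 \<or> a = 5" using assms(1) by arith
  moreover have "b = 0 \<or> b = 1 \<or> b = 2 \<or> b = 3 \<or> b = 4 \<or> b = 5" using assms(2) by arith
  moreover have y6: "\<And>y::nat. y < 6 \<longleftrightarrow> y = 0 \<or> y = 1 \<or> y = 2 \<or> y = 3 \<or> y = 4 \<or> y = 5" by arith
  ultimately show ?thesis using assms(3) unfolding c_def c'_def prt_def
    by (elim disjE) (simp_all add: y6)
qed

lemma nsqp: "(norm (x + y))\<^sup>2 = x \<bullet> x + y \<bullet> y + 2 * (x \<bullet> y)" for x y :: "real^'n::finite"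
  by (simp add: power2_norm_eq_inner inner_add_left inner_add_right inner_commute)

lemma K222case:
  fixes a b :: nat
  assumes n3: "CARD('n::finite) = 3" and aL: "a < 6" and bL: "b < 6" and ab: "a div 2 \<noteq> b div 2"
  shows "\<exists>Q0 Q1 :: nat \<Rightarrow> real^'n. good {0..<6} {{i, j} | i j. i < 6 \<and> j < 6 \<and> i div 2 \<noteq> j div 2} a b Q0 Q1"
proof -
  let ?VM = "{0..<6::nat}"
  let ?EM = "{{i, j} | i j. i < 6 \<and> j < (6::nat) \<and> i div 2 \<noteq> j div 2}"
  define c where "c = 2 * (3 - a div 2 - b div 2)"
  define c' where "c' = 2 * (3 - a div 2 - b div 2) + 1"
  define a' where "a' = prt a"
  define b' where "b' = prt b"
  note FF = k222_facts[OF aL bL ab, folded c_def c'_def a'_def b'_def]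
  obtain i1 i2 i3 :: 'n where I: "i1 \<noteq> i2" "i2 \<noteq> i3" "i1 \<noteq> i3"
    using n3 card_3_iff[of "UNIV :: 'n set"] by auto
  define e where "e i = axis i (1::real)" for i :: 'n
  have ee: "e i \<bullet> e j = (if i = j then 1 else 0)" for i j unfolding e_def by (rule ax)
  define Q0 :: "nat \<Rightarrow> real^'n" where "Q0 x = (if x = c then 0 else if x = a' then - e i1 else
       if x = b' then e i1 else if x = c' then e i2 else e i3)" for x
  define Q1 where "Q1 = Q0(b := - e i3)"
  have Qc: "Q0 c = 0" and Qa': "Q0 a' = - e i1" and Qb': "Q0 b' = e i1" and Qc': "Q0 c' = e i2"
    and Qa: "Q0 a = e i3" and Qb: "Q0 b = e i3"
    unfolding Q0_def using FF by auto
  have ab': "a \<noteq> b" using ab by auto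
  have g1: "Q0 a = Q0 b" using Qa Qb by simp
  have g2a: "Q1 a - Q1 b = e i3 - (- e i3)" unfolding Q1_def using ab' Qa by simp
  have g2: "(norm (Q1 a - Q1 b))\<^sup>2 = 4" unfolding g2a
    by (simp only: nsq, simp add: ee inner_minus_left inner_minus_right)
  have b_edge: "(norm (Q1 b - Q1 y))\<^sup>2 = (norm (Q0 b - Q0 y))\<^sup>2"
    if y: "y < 6" "y div 2 \<noteq> b div 2" "y \<noteq> a" for y
  proof -
    have yb: "y \<noteq> b" using y by auto
    have "y = a' \<or> y = c \<or> y = c'" using FF y by blast
    moreover have "Q1 b - Q1 y = - e i3 - Q0 y" unfolding Q1_def using yb by simp
    ultimately show ?thesis using Qb Qa' Qc Qc' I
      by (auto simp only: nsq, auto simp add: ee inner_minus_left inner_minus_right)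
  qed
  have g3: "edgeok ?VM ?EM a b Q1 Q0"
    unfolding edgeok_def
  proof (intro ballI impI)
    fix x y assume x: "x \<in> ?VM" and y: "y \<in> ?VM" and xy: "x \<noteq> y" and EMe: "{x, y} \<in> ?EM"
      and ne: "{x, y} \<noteq> {a, b}"
    have dv: "x div 2 \<noteq> y div 2" using EMe by (auto simp: doubleton_eq_iff)
    show "(norm (Q1 x - Q1 y))\<^sup>2 = (norm (Q0 x - Q0 y))\<^sup>2"
    proof (cases "x = b")
      case True then show ?thesis using b_edge[of y] y dv ne by auto
    next
      case xb: False
      show ?thesis
      proof (cases "y = b")
        case True
        then have "(norm (Q1 y - Q1 x))\<^sup>2 = (norm (Q0 y - Q0 x))\<^sup>2" using b_edge[of x] x dv ne
          by (auto simp: insert_commute)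
        then show ?thesis by (simp add: norm_minus_commute)
      next
        case False then show ?thesis using xb unfolding Q1_def by simp
      qed
    qed
  qed
  have g4: "(norm (P a - P b))\<^sup>2 \<in> {0, 4}" if H: "edgeok ?VM ?EM a b P Q0" for P :: "nat \<Rightarrow> real^'n"
  proof -
    have H': "\<And>x y. x < 6 \<Longrightarrow> y < 6 \<Longrightarrow> x div 2 \<noteq> y div 2 \<Longrightarrow> x \<noteq> a \<and> x \<noteq> b \<or> y \<noteq> a \<and> y \<noteq> b \<Longrightarrow>
       (norm (P x - P y))\<^sup>2 = (norm (Q0 x - Q0 y))\<^sup>2"
    proof -
      fix x y :: nat assume A: "x < 6" "y < 6" "x div 2 \<noteq> y div 2" "x \<noteq> a \<and> x \<noteq> b \<or> y \<noteq> a \<and> y \<noteq> b"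
      then have "{x,y} \<in> ?EM" by blast
      moreover have "x \<noteq> y" using A by auto
      moreover have "{x,y} \<noteq> {a,b}" using A by (auto simp: doubleton_eq_iff)
      ultimately show "(norm (P x - P y))\<^sup>2 = (norm (Q0 x - Q0 y))\<^sup>2"
        using H A unfolding edgeok_def by auto
    qed
    define X where "X = P a' - P c"
    define Y where "Y = P b' - P c"
    define Z where "Z = P c' - P c"
    define U where "U = P a - P c"
    define W where "W = P b - P c"
    have n1: "(norm (- e i1))\<^sup>2 = 1" "(norm (e i1))\<^sup>2 = 1" "(norm (e i3))\<^sup>2 = 1" by (simp_all add: e_def)
    have XX: "X \<bullet> X = 1"
    proof -
      have "(norm (P a' - P c))\<^sup>2 = (norm (Q0 a' - Q0 c))\<^sup>2" using H' FF by auto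
      then show ?thesis using Qa' Qc n1 by (simp add: X_def power2_norm_eq_inner)
    qed
    have YY: "Y \<bullet> Y = 1"
    proof -
      have "(norm (P b' - P c))\<^sup>2 = (norm (Q0 b' - Q0 c))\<^sup>2" using H' FF by auto
      then show ?thesis using Qb' Qc n1 by (simp add: Y_def power2_norm_eq_inner)
    qed
    have UU: "U \<bullet> U = 1"
    proof -
      have "(norm (P a - P c))\<^sup>2 = (norm (Q0 a - Q0 c))\<^sup>2" using H' FF aL by auto
      then show ?thesis using Qa Qc n1 by (simp add: U_def power2_norm_eq_inner)
    qed
    have WW: "W \<bullet> W = 1"
    proof -
      have "(norm (P b - P c))\<^sup>2 = (norm (Q0 b - Q0 c))\<^sup>2" using H' FF bL by auto
      then show ?thesis using Qb Qc n1 by (simp add: W_def power2_norm_eq_inner)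
    qed
    have XY: "(norm (X - Y))\<^sup>2 = 4"
    proof -
      have "(norm (P a' - P b'))\<^sup>2 = (norm (Q0 a' - Q0 b'))\<^sup>2" using H' FF by auto
      also have "\<dots> = (norm (- e i1 - e i1))\<^sup>2" using Qa' Qb' by simp
      also have "\<dots> = 4" by (simp only: nsq, simp add: ee inner_minus_left inner_minus_right)
      finally show ?thesis by (simp add: X_def Y_def)
    qed
    have XZ: "(norm (X - Z))\<^sup>2 = 2"
    proof -
      have "(norm (P a' - P c'))\<^sup>2 = (norm (Q0 a' - Q0 c'))\<^sup>2" using H' FF by auto
      also have "\<dots> = (norm (- e i1 - e i2))\<^sup>2" using Qa' Qc' by simp
      also have "\<dots> = 2" using I by (simp only: nsq, simp add: ee inner_minus_left inner_minus_right)
      finally show ?thesis by (simp add: X_def Z_def)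
    qed
    have YZ: "(norm (Y - Z))\<^sup>2 = 2"
    proof -
      have "(norm (P b' - P c'))\<^sup>2 = (norm (Q0 b' - Q0 c'))\<^sup>2" using H' FF by auto
      also have "\<dots> = (norm (e i1 - e i2))\<^sup>2" using Qb' Qc' by simp
      also have "\<dots> = 2" using I by (simp only: nsq, simp add: ee)
      finally show ?thesis by (simp add: Y_def Z_def)
    qed
    have UY: "(norm (U - Y))\<^sup>2 = 2"
    proof -
      have "(norm (P a - P b'))\<^sup>2 = (norm (Q0 a - Q0 b'))\<^sup>2" using H' FF aL by auto
      also have "\<dots> = (norm (e i3 - e i1))\<^sup>2" using Qa Qb' by simp
      also have "\<dots> = 2" using I by (simp only: nsq, simp add: ee)
      finally show ?thesis by (simp add: U_def Y_def)
    qed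
    have UZ: "(norm (U - Z))\<^sup>2 = 2"
    proof -
      have "(norm (P a - P c'))\<^sup>2 = (norm (Q0 a - Q0 c'))\<^sup>2" using H' FF aL by auto
      also have "\<dots> = (norm (e i3 - e i2))\<^sup>2" using Qa Qc' by simp
      also have "\<dots> = 2" using I by (simp only: nsq, simp add: ee)
      finally show ?thesis by (simp add: U_def Z_def)
    qed
    have WX: "(norm (W - X))\<^sup>2 = 2"
    proof -
      have "(norm (P b - P a'))\<^sup>2 = (norm (Q0 b - Q0 a'))\<^sup>2" using H' FF bL by auto
      also have "\<dots> = (norm (e i3 - - e i1))\<^sup>2" using Qb Qa' by simp
      also have "\<dots> = 2" using I by (simp only: nsq, simp add: ee inner_minus_left inner_minus_right)
      finally show ?thesis by (simp add: W_def X_def)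
    qed
    have WZ: "(norm (W - Z))\<^sup>2 = 2"
    proof -
      have "(norm (P b - P c'))\<^sup>2 = (norm (Q0 b - Q0 c'))\<^sup>2" using H' FF bL by auto
      also have "\<dots> = (norm (e i3 - e i2))\<^sup>2" using Qb Qc' by simp
      also have "\<dots> = 2" using I by (simp only: nsq, simp add: ee)
      finally show ?thesis by (simp add: W_def Z_def)
    qed
    have xy: "X \<bullet> Y = -1" using XY XX YY by (simp add: nsq)
    have "(norm (X + Y))\<^sup>2 = 0"
      using xy XX YY by (simp add: nsqp)
    then have "X + Y = 0" by simp
    then have Ym: "Y = - X" by (metis add.commute add_eq_0_iff)
    have "Y - Z = - (X + Z)" using Ym by simp
    then have YZ': "(norm (X + Z))\<^sup>2 = 2" using YZ by (metis norm_minus_cancel)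
    have ZZ: "Z \<bullet> Z = 1" and XZ0: "X \<bullet> Z = 0"
      using XZ YZ' XX by (simp_all add: nsq nsqp)
    have "U - Y = U + X" using Ym by simp
    then have "(norm (U + X))\<^sup>2 = 2" using UY by metis
    then have UX0: "U \<bullet> X = 0" using UU XX by (simp add: nsqp)
    have UZ0: "U \<bullet> Z = 0" using UZ UU ZZ by (simp add: nsq)
    have WX0: "W \<bullet> X = 0" using WX WW XX by (simp add: nsq)
    have WZ0: "W \<bullet> Z = 0" using WZ WW ZZ by (simp add: nsq)
    have XnZ: "X \<noteq> Z" using XX XZ0 by auto
    have "U \<bullet> W = 1 \<or> U \<bullet> W = -1"
    proof (rule orth_pm[of "{X, Z}"])
      show "finite {X, Z}" by simp
      show "card {X, Z} = CARD('n) - 1" using XnZ n3 by simp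
    qed (use XX ZZ XZ0 UU WW UX0 UZ0 WX0 WZ0 in \<open>auto simp: inner_commute\<close>)
    moreover have "(norm (P a - P b))\<^sup>2 = (norm (U - W))\<^sup>2" by (simp add: U_def W_def)
    ultimately show ?thesis using UU WW by (auto simp: nsq)
  qed
  show ?thesis unfolding good_def using g1 g2 g3 g4 by blast
qed

theorem mainTheorem10:
  fixes V :: "'a set" and E :: "'a set set" and u v :: 'a
    and VM :: "nat set" and EM :: "nat set set" and B :: "nat \<Rightarrow> 'a set" and a b :: nat
  assumes "CARD('n::finite) \<in> {1, 2, 3}"
    and "simple_graph V E"
    and "u \<in> V" and "v \<in> V" and "u \<noteq> v" and "{u, v} \<notin> E"
    and "forbidden_graph CARD('n) VM EM"
    and "induced_minor_model VM EM V (insert {u, v} E) B"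
    and "a \<in> VM" and "b \<in> VM" and "a \<noteq> b" and "u \<in> B a" and "v \<in> B b"
    and "\<forall>x\<in>B a. \<forall>y\<in>B b. {x, y} \<in> insert {u, v} E \<longrightarrow> {x, y} = {u, v}"
  shows "\<not> has_SIP TYPE('n) E u v"
proof -
  have abEM: "{a, b} \<in> EM" using assms(8-13) unfolding induced_minor_model_def by blast
  have "\<exists>Q0 Q1 :: nat \<Rightarrow> real^'n. good VM EM a b Q0 Q1"
  proof -
    consider "(VM, EM) = complete_graph (CARD('n) + 2)" | "CARD('n) = 3" "(VM, EM) = K222"
      using assms(7) unfolding forbidden_graph_def by (auto simp: eval_nat_numeral)
    then show ?thesis
    proof cases
      case 1
      then have VM: "VM = {0..<CARD('n)+2}" and EM: "EM = {{i, j} | i j. i < CARD('n)+2 \<and> j < CARD('n)+2 \<and> i \<noteq> j}"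
        unfolding complete_graph_def by auto
      show ?thesis unfolding VM EM by (rule Kcase) (use assms(9-11) VM in auto)
    next
      case 2
      then have VM: "VM = {0..<6}" and EM: "EM = {{i, j} | i j. i < 6 \<and> j < 6 \<and> i div 2 \<noteq> j div 2}"
        unfolding K222_def by auto
      have dab: "a div 2 \<noteq> b div 2" using abEM assms(11) unfolding EM by (auto simp: doubleton_eq_iff)
      show ?thesis unfolding EM using K222case[OF 2(1) _ _ dab] assms(9,10) VM by auto
    qed
  qed
  then obtain Q0 Q1 :: "nat \<Rightarrow> real^'n" where g: "good VM EM a b Q0 Q1" by blast
  show ?thesis
    by (rule reduction[OF assms(2) assms(6) assms(8-14), of Q0 Q1])
       (use g in \<open>auto simp: good_def edgeok_def\<close>)
qed

end
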